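(* For every $m\ge0$ and $t,\theta\in\mathbb N_0$ with $t\le\theta$, almost surely $$\sigma(t;m)>\theta\iff V(s;m)>m\ \text{for all } s=t,\dots,\theta\iff m<\underline M(t,\theta).$$
   Context: $(\Omega,\mathcal F,\mathbb P)$ complete with filtration $\{\mathcal F(t)\}_{t\in\mathbb N_0}$; $\beta\in(0,1)$; $\{h(t)\}_{t\in\mathbb N}$ positive, predictable ($h(t)$ is $\mathcal F(t-1)$-measurable), with $\mathbb E[\sum_{t\ge0}\beta^th(t+1)]<\infty$. $\mathcal S(t)$: stopping times with values in $\{t,t+1,\dots\}\cup\{\infty\}$; $\beta^\infty:=0$. For $m\ge0$: $V(t;m):=\operatorname{ess\,sup}_{\tau\in\mathcal S(t)}\mathbb E[\sum_{u=t}^{\tau-1}\beta^{u-t}h(u+1)+m\beta^{\tau-t}\mid\mathcal F(t)]$ (a.s. continuous in $m$, so it may be evaluated at random $m$); $\sigma(t;m):=\inf\{\theta\ge t:V(\theta;m)=m\}$ ($\inf\emptyset=\infty$). Gittins index $M(t):=\operatorname{ess\,sup}\{X>0\ \mathcal F(t)\text{-measurable}:V(t;X)\ge X\}$; $\underline M(t,\theta):=\min_{t\le u\le\theta}M(u)$. *)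

theory Defs
  imports "HOL-Probability.Probability"
begin

definition ess_sup_fam :: "'a measure \<Rightarrow> 'a measure \<Rightarrow> ('a \<Rightarrow> ennreal) set \<Rightarrow> ('a \<Rightarrow> ennreal)" where
  "ess_sup_fam M G S = (SOME Y. Y \<in> borel_measurable G
      \<and> (\<forall>X\<in>S. AE x in M. X x \<le> Y x)
      \<and> (\<forall>Z\<in>borel_measurable G. (\<forall>X\<in>S. AE x in M. X x \<le> Z x) \<longrightarrow> (AE x in M. Y x \<le> Z x)))"

definition stopping_times_from :: "'a measure \<Rightarrow> (nat \<Rightarrow> 'a measure) \<Rightarrow> nat \<Rightarrow> ('a \<Rightarrow> enat) set" where
  "stopping_times_from M F t = {\<tau>. (\<forall>n::nat. Measurable.pred (F n) (\<lambda>x. \<tau> x \<le> enat n))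
      \<and> (\<forall>x\<in>space M. enat t \<le> \<tau> x)}"

definition disc :: "real \<Rightarrow> nat \<Rightarrow> enat \<Rightarrow> real" where
  "disc \<beta> t k = (case k of enat n \<Rightarrow> \<beta> ^ (n - t) | \<infinity> \<Rightarrow> 0)"

definition payoff :: "real \<Rightarrow> (nat \<Rightarrow> 'a \<Rightarrow> real) \<Rightarrow> nat \<Rightarrow> ('a \<Rightarrow> real) \<Rightarrow> ('a \<Rightarrow> enat) \<Rightarrow> 'a \<Rightarrow> ennreal" where
  "payoff \<beta> h t m \<tau> x =
     (\<Sum>u. ennreal (if t \<le> u \<and> enat u < \<tau> x then \<beta> ^ (u - t) * h (Suc u) x else 0))
     + ennreal (m x * disc \<beta> t (\<tau> x))"

definition Vfun :: "'a measure \<Rightarrow> (nat \<Rightarrow> 'a measure) \<Rightarrow> real \<Rightarrow> (nat \<Rightarrow> 'a \<Rightarrow> real)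
    \<Rightarrow> nat \<Rightarrow> ('a \<Rightarrow> real) \<Rightarrow> 'a \<Rightarrow> ennreal" where
  "Vfun M F \<beta> h t m = ess_sup_fam M (F t)
      ((\<lambda>\<tau>. nn_cond_exp M (F t) (payoff \<beta> h t m \<tau>)) ` stopping_times_from M F t)"

definition sigma_opt :: "'a measure \<Rightarrow> (nat \<Rightarrow> 'a measure) \<Rightarrow> real \<Rightarrow> (nat \<Rightarrow> 'a \<Rightarrow> real)
    \<Rightarrow> nat \<Rightarrow> real \<Rightarrow> 'a \<Rightarrow> enat" where
  "sigma_opt M F \<beta> h t m x =
     (if \<exists>\<theta>\<ge>t. Vfun M F \<beta> h \<theta> (\<lambda>_. m) x = ennreal m
      then enat (LEAST \<theta>. t \<le> \<theta> \<and> Vfun M F \<beta> h \<theta> (\<lambda>_. m) x = ennreal m)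
      else \<infinity>)"

definition gittins :: "'a measure \<Rightarrow> (nat \<Rightarrow> 'a measure) \<Rightarrow> real \<Rightarrow> (nat \<Rightarrow> 'a \<Rightarrow> real)
    \<Rightarrow> nat \<Rightarrow> 'a \<Rightarrow> ennreal" where
  "gittins M F \<beta> h t = ess_sup_fam M (F t)
      ((\<lambda>X x. ennreal (X x)) ` {X. X \<in> borel_measurable (F t) \<and> (\<forall>x\<in>space M. 0 < X x)
           \<and> (AE x in M. ennreal (X x) < Vfun M F \<beta> h t X x)})"

definition gittins_low :: "'a measure \<Rightarrow> (nat \<Rightarrow> 'a measure) \<Rightarrow> real \<Rightarrow> (nat \<Rightarrow> 'a \<Rightarrow> real)
    \<Rightarrow> nat \<Rightarrow> nat \<Rightarrow> 'a \<Rightarrow> ennreal" where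
  "gittins_low M F \<beta> h t \<theta> x = (MIN u\<in>{t..\<theta>}. gittins M F \<beta> h u x)"

end

theory Submission
  imports Defs
begin

lemma ess_countable:
  fixes S :: "('a \<Rightarrow> ennreal) set"
  assumes P: "prob_space M" and sub: "subalgebra M G" and S: "S \<subseteq> borel_measurable G"
  shows "\<exists>J. countable J \<and> J \<subseteq> S \<and> (\<forall>X\<in>S. AE x in M. X x \<le> (SUP Y\<in>J. Y x))"
proof -
  interpret prob_space M by fact
  have SM: "X \<in> borel_measurable M" if "X \<in> S" for X
    using measurable_from_subalg[OF sub] S that by blast
  define U where "U q J = (\<Union>Y\<in>J. {x\<in>space M. q < Y x})" for q :: ennreal and J :: "('a \<Rightarrow> ennreal) set"
  have Umeas: "U q J \<in> sets M" if "countable J" "J \<subseteq> S" for q J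
    unfolding U_def using that SM by (intro sets.countable_UN') auto
  have key: "\<exists>J. countable J \<and> J \<subseteq> S \<and> (\<forall>X\<in>S. AE x in M. q < X x \<longrightarrow> (\<exists>Y\<in>J. q < Y x))" for q
  proof -
    let ?C = "{J. countable J \<and> J \<subseteq> S}"
    define c where "c = (SUP J\<in>?C. emeasure M (U q J))"
    have "?C \<noteq> {}" by auto
    from ennreal_SUP_countable_SUP[OF this, of "\<lambda>J. emeasure M (U q J)"]
    obtain f :: "nat \<Rightarrow> ennreal" where f: "range f \<subseteq> (\<lambda>J. emeasure M (U q J)) ` ?C" "c = Sup (range f)"
      unfolding c_def by blast
    have "\<forall>n. \<exists>J\<in>?C. f n = emeasure M (U q J)" using f(1) by blast
    then obtain Jn where Jn: "\<And>n. Jn n \<in> ?C" "\<And>n. f n = emeasure M (U q (Jn n))" by metis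
    define J where "J = (\<Union>n. Jn n)"
    have JC: "J \<in> ?C" using Jn(1) unfolding J_def by auto
    have cle: "emeasure M (U q J) \<le> c" unfolding c_def using JC by (rule SUP_upper)
    have cge: "c \<le> emeasure M (U q J)"
      unfolding f(2)
    proof (rule Sup_least)
      fix y assume "y \<in> range f"
      then obtain n where "y = f n" by auto
      moreover have "U q (Jn n) \<subseteq> U q J" unfolding U_def J_def by auto
      ultimately show "y \<le> emeasure M (U q J)" using Jn JC Umeas
        by (auto intro!: emeasure_mono)
    qed
    have "AE x in M. q < X x \<longrightarrow> (\<exists>Y\<in>J. q < Y x)" if X: "X \<in> S" for X
    proof -
      define B where "B = {x\<in>space M. q < X x}"
      have Bm: "B \<in> sets M" unfolding B_def using SM[OF X] by auto
      have UJ: "U q J \<in> sets M" using JC Umeas by auto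
      have "insert X J \<in> ?C" using JC X by auto
      then have "emeasure M (U q (insert X J)) \<le> c" unfolding c_def by (rule SUP_upper)
      moreover have "U q (insert X J) = U q J \<union> (B - U q J)" unfolding U_def B_def by auto
      moreover have "emeasure M (U q J \<union> (B - U q J)) = emeasure M (U q J) + emeasure M (B - U q J)"
        using UJ Bm by (intro plus_emeasure[symmetric]) auto
      ultimately have "emeasure M (U q J) + emeasure M (B - U q J) \<le> emeasure M (U q J) + 0"
        using cle cge by auto
      moreover have "emeasure M (U q J) \<noteq> \<infinity>" using UJ by (simp add: emeasure_eq_measure)
      ultimately have "emeasure M (B - U q J) = 0"
        by (metis ennreal_add_left_cancel_le le_zero_eq)
      then have "B - U q J \<in> null_sets M" using Bm UJ by auto
      from AE_not_in[OF this] AE_space show ?thesis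
        by eventually_elim (auto simp: B_def U_def)
    qed
    then show ?thesis using JC by blast
  qed
  then have "\<forall>q. \<exists>J. countable J \<and> J \<subseteq> S \<and> (\<forall>X\<in>S. AE x in M. q < X x \<longrightarrow> (\<exists>Y\<in>J. q < Y x))"
    by blast
  then have "\<exists>Jq. \<forall>q. countable (Jq q) \<and> Jq q \<subseteq> S \<and> (\<forall>X\<in>S. AE x in M. q < X x \<longrightarrow> (\<exists>Y\<in>Jq q. q < Y x))"
    by (rule choice)
  then obtain Jq where Jq: "\<And>q. countable (Jq q) \<and> Jq q \<subseteq> S \<and> (\<forall>X\<in>S. AE x in M. q < X x \<longrightarrow> (\<exists>Y\<in>Jq q. q < Y x))"
    by blast
  define J where "J = (\<Union>r::rat. Jq (ennreal (real_of_rat r)))"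
  have "countable J" unfolding J_def
    by (intro countable_UN) (simp_all add: Jq)
  moreover have "J \<subseteq> S" unfolding J_def using Jq by blast
  moreover have "AE x in M. X x \<le> (SUP Y\<in>J. Y x)" if X: "X \<in> S" for X
  proof -
    have "AE x in M. \<forall>r::rat. ennreal (real_of_rat r) < X x \<longrightarrow> (\<exists>Y\<in>Jq (ennreal (real_of_rat r)). ennreal (real_of_rat r) < Y x)"
      unfolding AE_all_countable using Jq X by blast
    then show ?thesis
    proof eventually_elim
      case (elim x)
      show ?case
      proof (rule ccontr)
        assume "\<not> X x \<le> (SUP Y\<in>J. Y x)"
        then have "(SUP Y\<in>J. Y x) < X x" by simp
        from ennreal_rat_dense[OF this] obtain r where r: "(SUP Y\<in>J. Y x) < ennreal (real_of_rat r)" "ennreal (real_of_rat r) < X x" by blast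
        with elim obtain Y where Y: "Y \<in> Jq (ennreal (real_of_rat r))" "ennreal (real_of_rat r) < Y x" by blast
        then have "Y \<in> J" unfolding J_def by auto
        then have "Y x \<le> (SUP Y\<in>J. Y x)" by (rule SUP_upper)
        with r Y show False by simp
      qed
    qed
  qed
  ultimately show ?thesis by blast
qed
lemma ess_exists:
  fixes S :: "('a \<Rightarrow> ennreal) set"
  assumes P: "prob_space M" and sub: "subalgebra M G" and S: "S \<subseteq> borel_measurable G"
  shows "\<exists>Y. Y \<in> borel_measurable G
      \<and> (\<forall>X\<in>S. AE x in M. X x \<le> Y x)
      \<and> (\<forall>Z\<in>borel_measurable G. (\<forall>X\<in>S. AE x in M. X x \<le> Z x) \<longrightarrow> (AE x in M. Y x \<le> Z x))"
proof -
  obtain J where J: "countable J" "J \<subseteq> S" "\<forall>X\<in>S. AE x in M. X x \<le> (SUP Y\<in>J. Y x)"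
    using ess_countable[OF assms] by blast
  have "(\<lambda>x. SUP Y\<in>J. Y x) \<in> borel_measurable G"
    using J S by (intro borel_measurable_SUP) auto
  moreover have "AE x in M. (SUP Y\<in>J. Y x) \<le> Z x"
    if "Z \<in> borel_measurable G" "\<forall>X\<in>S. AE x in M. X x \<le> Z x" for Z
  proof -
    have "AE x in M. \<forall>Y\<in>J. Y x \<le> Z x"
      using J that by (subst AE_ball_countable) auto
    then show ?thesis by eventually_elim (auto intro: SUP_least)
  qed
  ultimately show ?thesis using J by blast
qed

lemma ess_props:
  fixes S :: "('a \<Rightarrow> ennreal) set"
  assumes P: "prob_space M" and sub: "subalgebra M G" and S: "S \<subseteq> borel_measurable G"
  shows "ess_sup_fam M G S \<in> borel_measurable G"
    and "\<And>X. X \<in> S \<Longrightarrow> AE x in M. X x \<le> ess_sup_fam M G S x"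
    and "\<And>Z. Z \<in> borel_measurable G \<Longrightarrow> (\<And>X. X\<in>S \<Longrightarrow> AE x in M. X x \<le> Z x) \<Longrightarrow> (AE x in M. ess_sup_fam M G S x \<le> Z x)"
proof -
  have *: "ess_sup_fam M G S \<in> borel_measurable G
      \<and> (\<forall>X\<in>S. AE x in M. X x \<le> ess_sup_fam M G S x)
      \<and> (\<forall>Z\<in>borel_measurable G. (\<forall>X\<in>S. AE x in M. X x \<le> Z x) \<longrightarrow> (AE x in M. ess_sup_fam M G S x \<le> Z x))"
    unfolding ess_sup_fam_def by (rule someI_ex[OF ess_exists[OF assms]])
  then show "ess_sup_fam M G S \<in> borel_measurable G" by blast
  from * show "\<And>X. X \<in> S \<Longrightarrow> AE x in M. X x \<le> ess_sup_fam M G S x" by blast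
  from * show "\<And>Z. Z \<in> borel_measurable G \<Longrightarrow> (\<And>X. X\<in>S \<Longrightarrow> AE x in M. X x \<le> Z x) \<Longrightarrow> (AE x in M. ess_sup_fam M G S x \<le> Z x)" by blast
qed

lemma ess_rep:
  fixes S :: "('a \<Rightarrow> ennreal) set"
  assumes P: "prob_space M" and sub: "subalgebra M G" and S: "S \<subseteq> borel_measurable G"
  shows "\<exists>J. countable J \<and> J \<subseteq> S \<and> (AE x in M. ess_sup_fam M G S x \<le> (SUP Y\<in>J. Y x))"
proof -
  obtain J where J: "countable J" "J \<subseteq> S" "\<forall>X\<in>S. AE x in M. X x \<le> (SUP Y\<in>J. Y x)"
    using ess_countable[OF assms] by blast
  have "(\<lambda>x. SUP Y\<in>J. Y x) \<in> borel_measurable G"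
    using J S by (intro borel_measurable_SUP) auto
  from ess_props(3)[OF assms this] J have "AE x in M. ess_sup_fam M G S x \<le> (SUP Y\<in>J. Y x)" by blast
  with J show ?thesis by blast
qed



lemma ennreal_term_le_suminf: "(f::nat \<Rightarrow> ennreal) u \<le> suminf f"
proof -
  have "sum f {u} \<le> suminf f" by (rule sum_le_suminf) auto
  then show ?thesis by simp
qed

lemma enat_eq_iff_aux: "(k = enat n) \<longleftrightarrow> (k \<le> enat n \<and> \<not> (0 < n \<and> k \<le> enat (n - 1)))"
  by (cases k) auto

lemma enat_inf_iff_aux: "(k = \<infinity>) \<longleftrightarrow> (\<forall>n. \<not> k \<le> enat n)"
  by (cases k) auto

locale gsetup =
  fixes M :: "'a measure" and F :: "nat \<Rightarrow> 'a measure" and \<beta> :: real and h :: "nat \<Rightarrow> 'a \<Rightarrow> real"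
  assumes P: "prob_space M"
    and sub: "\<And>n. subalgebra M (F n)"
    and bpos: "0 < \<beta>" and blt: "\<beta> < 1"
    and hpos: "\<And>n x. x \<in> space M \<Longrightarrow> 0 < h n x"
    and hmeas: "\<And>n. h (Suc n) \<in> borel_measurable (F n)"
begin

lemma sfs: "sigma_finite_subalgebra M (F s)"
  apply (rule finite_measure_subalgebra_is_sigma_finite)
  unfolding finite_measure_subalgebra_def finite_measure_subalgebra_axioms_def
  using P sub unfolding prob_space_def by blast

lemma hmeasM: "h (Suc n) \<in> borel_measurable M"
  using measurable_from_subalg[OF sub hmeas] .

lemma st_le:
  assumes "\<tau> \<in> stopping_times_from M F s"
  shows "Measurable.pred M (\<lambda>x. \<tau> x \<le> enat n)"
  using assms measurable_from_subalg[OF sub[of n], of "\<lambda>x. \<tau> x \<le> enat n" "count_space UNIV"]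
  unfolding stopping_times_from_def pred_def by blast

lemma st_meas:
  assumes tau: "\<tau> \<in> stopping_times_from M F s"
  shows "\<tau> \<in> measurable M (count_space UNIV)"
proof -
  note [measurable] = st_le[OF tau]
  have "\<tau> -` {a} \<inter> space M \<in> sets M" for a
  proof (cases a)
    case (enat n)
    have "\<tau> -` {a} \<inter> space M = {x\<in>space M. \<tau> x \<le> enat n \<and> \<not> (0 < n \<and> \<tau> x \<le> enat (n - 1))}"
      unfolding enat using enat_eq_iff_aux[of _ n] by blast
    also have "\<dots> \<in> sets M" by measurable
    finally show ?thesis .
  next
    case infinity
    have "\<tau> -` {a} \<inter> space M = {x\<in>space M. \<forall>n. \<not> \<tau> x \<le> enat n}"
      unfolding infinity using enat_inf_iff_aux by blast
    also have "\<dots> \<in> sets M" by measurable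
    finally show ?thesis .
  qed
  then show ?thesis by (auto simp: measurable_count_space_eq2_countable)
qed

lemma disc_meas:
  assumes tau: "\<tau> \<in> stopping_times_from M F s"
  shows "(\<lambda>x. disc \<beta> s (\<tau> x)) \<in> borel_measurable M"
  by (rule measurable_compose[OF st_meas[OF tau]]) simp

lemma payoff_meas:
  assumes tau: "\<tau> \<in> stopping_times_from M F s" and m: "X \<in> borel_measurable M"
  shows "payoff \<beta> h s X \<tau> \<in> borel_measurable M"
proof -
  note [measurable] = st_le[OF tau] disc_meas[OF tau] hmeasM m
  have [measurable]: "Measurable.pred M (\<lambda>x. enat u < \<tau> x)" for u
    unfolding not_le[symmetric] by measurable
  show ?thesis unfolding payoff_def by measurable
qed

lemma disc_bounds: "0 \<le> disc \<beta> s k" "disc \<beta> s k \<le> 1"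
  using bpos blt by (auto simp: disc_def power_le_one split: enat.splits)

end


lemma disc_ineq:
  fixes X m d :: real
  assumes "0 \<le> d" "d \<le> 1" "0 \<le> m"
  shows "ennreal (X * d) \<le> ennreal (m * d) + ennreal (X - m)"
proof (cases "X \<le> m")
  case True
  then have "X * d \<le> m * d" using assms by (intro mult_right_mono) auto
  then have "ennreal (X * d) \<le> ennreal (m * d)" by (rule ennreal_leI)
  then show ?thesis by (simp add: add_increasing2)
next
  case False
  have "(X - m) * d \<le> (X - m) * 1" using False assms by (intro mult_left_mono) auto
  then have "X * d \<le> m * d + (X - m)" by (simp add: algebra_simps)
  then have "ennreal (X * d) \<le> ennreal (m * d + (X - m))" by (rule ennreal_leI)
  also have "\<dots> = ennreal (m * d) + ennreal (X - m)"
    using False assms by (intro ennreal_plus) auto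
  finally show ?thesis .
qed

context gsetup
begin

lemma fam_meas: "(\<lambda>\<tau>. nn_cond_exp M (F s) (payoff \<beta> h s X \<tau>)) ` stopping_times_from M F s \<subseteq> borel_measurable (F s)"
  by auto

lemma V_meas: "Vfun M F \<beta> h s X \<in> borel_measurable (F s)"
  unfolding Vfun_def by (rule ess_props(1)[OF P sub fam_meas])

lemma V_measM: "Vfun M F \<beta> h s X \<in> borel_measurable M"
  by (rule measurable_from_subalg[OF sub V_meas])

lemma V_upper: "\<tau> \<in> stopping_times_from M F s \<Longrightarrow>
    AE x in M. nn_cond_exp M (F s) (payoff \<beta> h s X \<tau>) x \<le> Vfun M F \<beta> h s X x"
  unfolding Vfun_def by (rule ess_props(2)[OF P sub fam_meas]) auto

lemma V_least: "Z \<in> borel_measurable (F s) \<Longrightarrow>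
   (\<And>\<tau>. \<tau> \<in> stopping_times_from M F s \<Longrightarrow> AE x in M. nn_cond_exp M (F s) (payoff \<beta> h s X \<tau>) x \<le> Z x)
   \<Longrightarrow> AE x in M. Vfun M F \<beta> h s X x \<le> Z x"
  unfolding Vfun_def by (rule ess_props(3)[OF P sub fam_meas]) auto

lemma st_const: "(\<lambda>_. enat s) \<in> stopping_times_from M F s"
  unfolding stopping_times_from_def by auto

lemma st_inf: "(\<lambda>_. \<infinity>) \<in> stopping_times_from M F s"
  unfolding stopping_times_from_def by auto

lemma V_ge_X:
  assumes X: "X \<in> borel_measurable (F s)"
  shows "AE x in M. ennreal (X x) \<le> Vfun M F \<beta> h s X x"
proof -
  interpret sigma_finite_subalgebra M "F s" by (rule sfs)
  have eq: "payoff \<beta> h s X (\<lambda>_. enat s) = (\<lambda>x. ennreal (X x))"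
  proof (rule ext)
    fix x
    have z: "(\<lambda>u. ennreal (if s \<le> u \<and> enat u < enat s then \<beta> ^ (u - s) * h (Suc u) x else 0)) = (\<lambda>_. 0)"
      by auto
    show "payoff \<beta> h s X (\<lambda>_. enat s) x = ennreal (X x)"
      unfolding payoff_def z by (simp add: disc_def)
  qed
  have "(\<lambda>x. ennreal (X x)) \<in> borel_measurable (F s)" using X by measurable
  from nn_cond_exp_F_meas[OF this] V_upper[OF st_const, where X=X and s=s, unfolded eq]
  show ?thesis by eventually_elim simp
qed

lemma V_ge_h:
  assumes X: "X \<in> borel_measurable M"
  shows "AE x in M. ennreal (h (Suc s) x) \<le> Vfun M F \<beta> h s X x"
proof -
  interpret sigma_finite_subalgebra M "F s" by (rule sfs)
  have pw: "ennreal (h (Suc s) x) \<le> payoff \<beta> h s X (\<lambda>_. \<infinity>) x" for x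
  proof -
    have "ennreal (h (Suc s) x) = (\<lambda>u. ennreal (if s \<le> u \<and> enat u < \<infinity> then \<beta> ^ (u - s) * h (Suc u) x else 0)) s"
      by simp
    also have "\<dots> \<le> (\<Sum>u. ennreal (if s \<le> u \<and> enat u < \<infinity> then \<beta> ^ (u - s) * h (Suc u) x else 0))"
      by (rule ennreal_term_le_suminf)
    also have "\<dots> \<le> payoff \<beta> h s X (\<lambda>_. \<infinity>) x"
      unfolding payoff_def by (rule add_increasing2) auto
    finally show ?thesis .
  qed
  have hm: "(\<lambda>x. ennreal (h (Suc s) x)) \<in> borel_measurable (F s)" using hmeas by measurable
  have hmM: "(\<lambda>x. ennreal (h (Suc s) x)) \<in> borel_measurable M" using hmeasM by measurable
  have mono: "AE x in M. nn_cond_exp M (F s) (\<lambda>x. ennreal (h (Suc s) x)) x \<le> nn_cond_exp M (F s) (payoff \<beta> h s X (\<lambda>_. \<infinity>)) x"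
    by (rule nn_cond_exp_mono[OF _ hmM payoff_meas[OF st_inf X]]) (use pw in auto)
  from nn_cond_exp_F_meas[OF hm] V_upper[OF st_inf, where X=X and s=s] mono
  show ?thesis by eventually_elim simp
qed

lemma payoff_mono:
  assumes "Y x \<le> X x"
  shows "payoff \<beta> h s Y \<tau> x \<le> payoff \<beta> h s X \<tau> x"
proof -
  have "Y x * disc \<beta> s (\<tau> x) \<le> X x * disc \<beta> s (\<tau> x)"
    using assms disc_bounds by (intro mult_right_mono) auto
  then show ?thesis unfolding payoff_def by (intro add_left_mono ennreal_leI)
qed

lemma V_loc:
  assumes A: "A \<in> sets (F s)" and X: "X \<in> borel_measurable (F s)" and Y: "Y \<in> borel_measurable (F s)"
    and le: "\<And>x. x \<in> A \<Longrightarrow> Y x \<le> X x"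
  shows "AE x in M. x \<in> A \<longrightarrow> Vfun M F \<beta> h s Y x \<le> Vfun M F \<beta> h s X x"
proof -
  interpret sigma_finite_subalgebra M "F s" by (rule sfs)
  have XM: "X \<in> borel_measurable M" by (rule measurable_from_subalg[OF sub X])
  have YM: "Y \<in> borel_measurable M" by (rule measurable_from_subalg[OF sub Y])
  define Z where "Z = (\<lambda>x. if x \<in> A then Vfun M F \<beta> h s X x else \<infinity>)"
  have Zm: "Z \<in> borel_measurable (F s)" unfolding Z_def
    using A V_meas by (intro measurable_If_set) auto
  have "AE x in M. Vfun M F \<beta> h s Y x \<le> Z x"
  proof (rule V_least[OF Zm])
    fix \<tau> assume tau: "\<tau> \<in> stopping_times_from M F s"
    have pY: "payoff \<beta> h s Y \<tau> \<in> borel_measurable M" by (rule payoff_meas[OF tau YM])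
    have pX: "payoff \<beta> h s X \<tau> \<in> borel_measurable M" by (rule payoff_meas[OF tau XM])
    have ind: "(\<lambda>x. indicator A x :: ennreal) \<in> borel_measurable (F s)" using A by measurable
    have indM: "(\<lambda>x. indicator A x * payoff \<beta> h s Y \<tau> x) \<in> borel_measurable M"
      using measurable_from_subalg[OF sub ind] pY by measurable
    have pw: "indicator A x * payoff \<beta> h s Y \<tau> x \<le> payoff \<beta> h s X \<tau> x" for x
      using payoff_mono[of Y x X s \<tau>] le by (cases "x \<in> A") auto
    have 1: "AE x in M. indicator A x * nn_cond_exp M (F s) (payoff \<beta> h s Y \<tau>) x
        = nn_cond_exp M (F s) (\<lambda>x. indicator A x * payoff \<beta> h s Y \<tau> x) x"
      by (rule nn_cond_exp_prod[OF ind pY])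
    have 2: "AE x in M. nn_cond_exp M (F s) (\<lambda>x. indicator A x * payoff \<beta> h s Y \<tau> x) x
        \<le> nn_cond_exp M (F s) (payoff \<beta> h s X \<tau>) x"
      by (rule nn_cond_exp_mono[OF _ indM pX]) (use pw in auto)
    from 1 2 V_upper[OF tau, where X=X]
    show "AE x in M. nn_cond_exp M (F s) (payoff \<beta> h s Y \<tau>) x \<le> Z x"
    proof eventually_elim
      case (elim x)
      then show ?case unfolding Z_def by (cases "x \<in> A") auto
    qed
  qed
  then show ?thesis by eventually_elim (auto simp: Z_def)
qed

lemma V_sub:
  assumes X: "X \<in> borel_measurable (F s)" and m: "0 \<le> m"
  shows "AE x in M. Vfun M F \<beta> h s X x \<le> Vfun M F \<beta> h s (\<lambda>_. m) x + ennreal (X x - m)"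
proof -
  interpret sigma_finite_subalgebra M "F s" by (rule sfs)
  have XM: "X \<in> borel_measurable M" by (rule measurable_from_subalg[OF sub X])
  define Z where "Z = (\<lambda>x. Vfun M F \<beta> h s (\<lambda>_. m) x + ennreal (X x - m))"
  have Zm: "Z \<in> borel_measurable (F s)" unfolding Z_def
    using V_meas X by measurable
  have "AE x in M. Vfun M F \<beta> h s X x \<le> Z x"
  proof (rule V_least[OF Zm])
    fix \<tau> assume tau: "\<tau> \<in> stopping_times_from M F s"
    have pm: "payoff \<beta> h s (\<lambda>_. m) \<tau> \<in> borel_measurable M" by (rule payoff_meas[OF tau]) simp
    have pX: "payoff \<beta> h s X \<tau> \<in> borel_measurable M" by (rule payoff_meas[OF tau XM])
    have dm: "(\<lambda>x. ennreal (X x - m)) \<in> borel_measurable (F s)" using X by measurable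
    have dmM: "(\<lambda>x. ennreal (X x - m)) \<in> borel_measurable M" using XM by measurable
    have pw: "payoff \<beta> h s X \<tau> x \<le> payoff \<beta> h s (\<lambda>_. m) \<tau> x + ennreal (X x - m)" for x
    proof -
      have "ennreal (X x * disc \<beta> s (\<tau> x)) \<le> ennreal (m * disc \<beta> s (\<tau> x)) + ennreal (X x - m)"
        by (rule disc_ineq) (use disc_bounds m in auto)
      then show ?thesis unfolding payoff_def add.assoc by (rule add_left_mono)
    qed
    have 1: "AE x in M. nn_cond_exp M (F s) (payoff \<beta> h s X \<tau>) x
       \<le> nn_cond_exp M (F s) (\<lambda>x. payoff \<beta> h s (\<lambda>_. m) \<tau> x + ennreal (X x - m)) x"
      by (rule nn_cond_exp_mono[OF _ pX]) (use pw pm dmM in auto)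
    have 2: "AE x in M. nn_cond_exp M (F s) (payoff \<beta> h s (\<lambda>_. m) \<tau>) x + nn_cond_exp M (F s) (\<lambda>x. ennreal (X x - m)) x
       = nn_cond_exp M (F s) (\<lambda>x. payoff \<beta> h s (\<lambda>_. m) \<tau> x + ennreal (X x - m)) x"
      by (rule nn_cond_exp_sum[OF pm dmM])
    from 1 2 nn_cond_exp_F_meas[OF dm] V_upper[OF tau, where X="\<lambda>_. m"]
    show "AE x in M. nn_cond_exp M (F s) (payoff \<beta> h s X \<tau>) x \<le> Z x"
    proof eventually_elim
      case (elim x)
      let ?a = "nn_cond_exp M (F s) (payoff \<beta> h s X \<tau>) x"
      let ?b = "nn_cond_exp M (F s) (payoff \<beta> h s (\<lambda>_. m) \<tau>) x"
      let ?c = "nn_cond_exp M (F s) (\<lambda>x. ennreal (X x - m)) x"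
      have "?a \<le> ?b + ?c" using elim(1,2) by simp
      also have "\<dots> = ?b + ennreal (X x - m)" using elim(3) by simp
      also have "\<dots> \<le> Vfun M F \<beta> h s (\<lambda>_. m) x + ennreal (X x - m)" using elim(4) by (rule add_right_mono)
      finally show ?case unfolding Z_def .
    qed
  qed
  then show ?thesis unfolding Z_def .
qed

end


context gsetup
begin

definition GS where "GS s = {X. X \<in> borel_measurable (F s) \<and> (\<forall>x\<in>space M. 0 < X x)
           \<and> (AE x in M. ennreal (X x) < Vfun M F \<beta> h s X x)}"

lemma gfam_meas: "(\<lambda>X x. ennreal (X x)) ` GS s \<subseteq> borel_measurable (F s)"
  unfolding GS_def by auto

lemma gittins_eq: "gittins M F \<beta> h s = ess_sup_fam M (F s) ((\<lambda>X x. ennreal (X x)) ` GS s)"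
  unfolding gittins_def GS_def ..

lemma G1:
  assumes m: "0 \<le> m"
  shows "AE x in M. ennreal m < gittins M F \<beta> h s x \<longrightarrow> ennreal m < Vfun M F \<beta> h s (\<lambda>_. m) x"
proof -
  obtain J where J: "countable J" "J \<subseteq> (\<lambda>X x. ennreal (X x)) ` GS s"
    "AE x in M. gittins M F \<beta> h s x \<le> (SUP Y\<in>J. Y x)"
    using ess_rep[OF P sub gfam_meas] unfolding gittins_eq by blast
  have each: "AE x in M. ennreal m < j x \<longrightarrow> ennreal m < Vfun M F \<beta> h s (\<lambda>_. m) x" if j: "j \<in> J" for j
  proof -
    obtain X where X: "j = (\<lambda>x. ennreal (X x))" "X \<in> GS s" using j J(2) by blast
    have Xm: "X \<in> borel_measurable (F s)" and lt: "AE x in M. ennreal (X x) < Vfun M F \<beta> h s X x"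
      using X(2) unfolding GS_def by auto
    from lt V_sub[OF Xm m] show ?thesis
    proof eventually_elim
      case (elim x)
      show ?case
      proof
        assume "ennreal m < j x"
        then have mx: "m < X x" using X(1) m by (simp add: ennreal_less_iff)
        have "ennreal (X x) = ennreal (X x - m) + ennreal m"
          using mx m by (subst ennreal_plus[symmetric]) auto
        with elim have "ennreal (X x - m) + ennreal m < ennreal (X x - m) + Vfun M F \<beta> h s (\<lambda>_. m) x"
          by (metis add.commute order_less_le_trans)
        then show "ennreal m < Vfun M F \<beta> h s (\<lambda>_. m) x"
          by (simp add: ennreal_add_left_cancel_less)
      qed
    qed
  qed
  have "AE x in M. \<forall>j\<in>J. ennreal m < j x \<longrightarrow> ennreal m < Vfun M F \<beta> h s (\<lambda>_. m) x"
    using J(1) each by (subst AE_ball_countable) auto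
  with J(3) show ?thesis
  proof eventually_elim
    case (elim x)
    show ?case
    proof
      assume "ennreal m < gittins M F \<beta> h s x"
      with elim(1) have "ennreal m < (SUP Y\<in>J. Y x)" by (meson order_less_le_trans)
      then obtain j where "j \<in> J" "ennreal m < j x" by (auto simp: less_SUP_iff)
      with elim(2) show "ennreal m < Vfun M F \<beta> h s (\<lambda>_. m) x" by blast
    qed
  qed
qed

lemma G2:
  assumes m: "0 \<le> m"
  shows "AE x in M. ennreal m < Vfun M F \<beta> h s (\<lambda>_. m) x \<longrightarrow> ennreal m < gittins M F \<beta> h s x"
proof -
  define A where "A k = {x\<in>space M. ennreal (m + 1 / real (Suc k)) < Vfun M F \<beta> h s (\<lambda>_. m) x}" for k
  define Xk where "Xk k x = (if x \<in> A k then m + 1 / real (Suc k) else h (Suc s) x / 2)" for k x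
  have spF: "space (F s) = space M" using sub[of s] unfolding subalgebra_def by simp
  have Ak: "A k \<in> sets (F s)" for k
  proof -
    have "{x\<in>space (F s). ennreal (m + 1 / real (Suc k)) < Vfun M F \<beta> h s (\<lambda>_. m) x} \<in> sets (F s)"
      using V_meas by measurable
    then show ?thesis unfolding A_def spF .
  qed
  have Xm: "Xk k \<in> borel_measurable (F s)" for k
    unfolding Xk_def[abs_def] using Ak hmeas by (intro measurable_If_set) auto
  have XmM: "Xk k \<in> borel_measurable M" for k by (rule measurable_from_subalg[OF sub Xm])
  have inGS: "Xk k \<in> GS s" for k
  proof -
    have "0 < 1 / real (Suc k)" by simp
    then have "0 < m + 1 / real (Suc k)" using m by linarith
    then have pos: "\<forall>x\<in>space M. 0 < Xk k x"
      using hpos unfolding Xk_def by auto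
    have "AE x in M. ennreal (Xk k x) < Vfun M F \<beta> h s (Xk k) x"
    proof -
      have const: "(\<lambda>_. m) \<in> borel_measurable (F s)" by simp
      have vl: "AE x in M. x \<in> A k \<longrightarrow> Vfun M F \<beta> h s (\<lambda>_. m) x \<le> Vfun M F \<beta> h s (Xk k) x"
        by (rule V_loc[OF Ak[of k] Xm[of k] const]) (simp add: Xk_def)
      from vl V_ge_h[OF XmM[of k], where s=s] AE_space
      show ?thesis
      proof eventually_elim
        case (elim x)
        show ?case
        proof (cases "x \<in> A k")
          case True
          then have "ennreal (Xk k x) < Vfun M F \<beta> h s (\<lambda>_. m) x"
            unfolding Xk_def A_def by simp
          also have "\<dots> \<le> Vfun M F \<beta> h s (Xk k) x" using elim True by simp
          finally show ?thesis .
        next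
          case False
          have hp: "0 < h (Suc s) x" using hpos elim(3) by simp
          then have "ennreal (Xk k x) < ennreal (h (Suc s) x)"
            unfolding Xk_def using False by (intro ennreal_lessI) auto
          also have "\<dots> \<le> Vfun M F \<beta> h s (Xk k) x" using elim by simp
          finally show ?thesis .
        qed
      qed
    qed
    then show ?thesis unfolding GS_def using Xm pos by blast
  qed
  have "AE x in M. ennreal (Xk k x) \<le> gittins M F \<beta> h s x" for k
    unfolding gittins_eq by (rule ess_props(2)[OF P sub gfam_meas]) (use inGS in blast)
  then have "AE x in M. \<forall>k. ennreal (Xk k x) \<le> gittins M F \<beta> h s x"
    by (subst AE_all_countable) auto
  with AE_space show ?thesis
  proof eventually_elim
    case (elim x)
    show ?case
    proof
      assume lt: "ennreal m < Vfun M F \<beta> h s (\<lambda>_. m) x"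
      have "\<exists>k. ennreal (m + 1 / real (Suc k)) < Vfun M F \<beta> h s (\<lambda>_. m) x"
      proof (cases "Vfun M F \<beta> h s (\<lambda>_. m) x" rule: ennreal_cases)
        case (real r)
        with lt m have "m < r" by (simp add: ennreal_less_iff)
        then obtain k where "inverse (real (Suc k)) < r - m"
          using reals_Archimedean[of "r - m"] by auto
        then have "m + 1 / real (Suc k) < r" by (simp add: field_simps)
        moreover have "0 < 1 / real (Suc k)" by simp
        ultimately have "ennreal (m + 1 / real (Suc k)) < ennreal r"
          using m by (intro ennreal_lessI) linarith+
        then show ?thesis using real by (intro exI[of _ k]) simp
      next
        case top
        then show ?thesis by auto
      qed
      then obtain k where k: "ennreal (m + 1 / real (Suc k)) < Vfun M F \<beta> h s (\<lambda>_. m) x" by blast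
      then have "x \<in> A k" using elim(1) unfolding A_def by simp
      then have "Xk k x = m + 1 / real (Suc k)" unfolding Xk_def by simp
      moreover have "ennreal m < ennreal (m + 1 / real (Suc k))"
      proof -
        have "0 < 1 / real (Suc k)" by simp
        then show ?thesis using m by (intro ennreal_lessI) linarith+
      qed
      ultimately show "ennreal m < gittins M F \<beta> h s x"
        using elim(2) by (metis order_less_le_trans)
    qed
  qed
qed

end


theorem lemma3p3:
  fixes M :: "'a measure" and F :: "nat \<Rightarrow> 'a measure" and \<beta> :: real
    and h :: "nat \<Rightarrow> 'a \<Rightarrow> real" and m :: real and t \<theta> :: nat
  assumes "prob_space M" and "complete_measure M"
    and "filtration (space M) F" and "\<And>n. subalgebra M (F n)"
    and "0 < \<beta>" and "\<beta> < 1"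
    and "\<And>n x. x \<in> space M \<Longrightarrow> 0 < h n x"
    and "\<And>n. h (Suc n) \<in> borel_measurable (F n)"
    and "(\<integral>\<^sup>+ x. (\<Sum>n. ennreal (\<beta> ^ n * h (Suc n) x)) \<partial>M) < \<infinity>"
    and "0 \<le> m" and "t \<le> \<theta>"
  shows "AE x in M.
     (enat \<theta> < sigma_opt M F \<beta> h t m x
        \<longleftrightarrow> (\<forall>s\<in>{t..\<theta>}. ennreal m < Vfun M F \<beta> h s (\<lambda>_. m) x))
   \<and> ((\<forall>s\<in>{t..\<theta>}. ennreal m < Vfun M F \<beta> h s (\<lambda>_. m) x)
        \<longleftrightarrow> ennreal m < gittins_low M F \<beta> h t \<theta> x)"
proof -
  interpret gsetup M F \<beta> h
    by (rule gsetup.intro[where M=M and F=F and \<beta>=\<beta> and h=h, OF assms(1) assms(4) assms(5) assms(6) assms(7) assms(8)])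
  have m: "0 \<le> m" by fact
  have "AE x in M. ennreal m \<le> Vfun M F \<beta> h s (\<lambda>_. m) x
      \<and> (ennreal m < Vfun M F \<beta> h s (\<lambda>_. m) x \<longleftrightarrow> ennreal m < gittins M F \<beta> h s x)" for s
  proof -
    have c: "(\<lambda>_. m) \<in> borel_measurable (F s)" by simp
    from V_ge_X[OF c] G1[OF m, of s] G2[OF m, of s] show ?thesis
      by eventually_elim blast
  qed
  then have "AE x in M. \<forall>s. ennreal m \<le> Vfun M F \<beta> h s (\<lambda>_. m) x
      \<and> (ennreal m < Vfun M F \<beta> h s (\<lambda>_. m) x \<longleftrightarrow> ennreal m < gittins M F \<beta> h s x)"
    by (subst AE_all_countable) auto
  then show ?thesis
  proof eventually_elim
    case (elim x)
    let ?V = "\<lambda>s. Vfun M F \<beta> h s (\<lambda>_. m) x"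
    have ne: "?V s \<noteq> ennreal m \<longleftrightarrow> ennreal m < ?V s" for s
      using elim[rule_format, of s] by auto
    have A: "enat \<theta> < sigma_opt M F \<beta> h t m x \<longleftrightarrow> (\<forall>s\<in>{t..\<theta>}. ennreal m < ?V s)"
    proof (cases "\<exists>\<theta>'\<ge>t. ?V \<theta>' = ennreal m")
      case True
      define L where "L = (LEAST \<theta>'. t \<le> \<theta>' \<and> ?V \<theta>' = ennreal m)"
      have L: "t \<le> L \<and> ?V L = ennreal m" unfolding L_def
        using True by (rule LeastI_ex) 
      have Lle: "L \<le> s" if "t \<le> s" "?V s = ennreal m" for s
        unfolding L_def using that by (intro Least_le) auto
      have sig: "sigma_opt M F \<beta> h t m x = enat L"
        unfolding sigma_opt_def L_def using True by simp
      show ?thesis unfolding sig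
      proof
        assume "enat \<theta> < enat L"
        then have "\<theta> < L" by simp
        then show "\<forall>s\<in>{t..\<theta>}. ennreal m < ?V s"
          using Lle ne by (meson atLeastAtMost_iff leD order_trans)
      next
        assume H: "\<forall>s\<in>{t..\<theta>}. ennreal m < ?V s"
        show "enat \<theta> < enat L"
        proof (rule ccontr)
          assume "\<not> enat \<theta> < enat L"
          then have "L \<le> \<theta>" by simp
          with L have "L \<in> {t..\<theta>}" by simp
          with H have "ennreal m < ?V L" by blast
          with L show False by simp
        qed
      qed
    next
      case False
      then have sig: "sigma_opt M F \<beta> h t m x = \<infinity>"
        unfolding sigma_opt_def by auto
      show ?thesis unfolding sig using False ne by auto
    qed
    have B: "(\<forall>s\<in>{t..\<theta>}. ennreal m < ?V s) \<longleftrightarrow> ennreal m < gittins_low M F \<beta> h t \<theta> x"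
    proof -
      have "ennreal m < gittins_low M F \<beta> h t \<theta> x \<longleftrightarrow> (\<forall>s\<in>{t..\<theta>}. ennreal m < gittins M F \<beta> h s x)"
        unfolding gittins_low_def using assms(11) by (subst Min_gr_iff) auto
      then show ?thesis using elim by auto
    qed
    from A B show ?case by blast
  qed
qed


end
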